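(* Let $M,N$ be weight sequences with $m_k^{1/k}\to\infty$, $n_k^{1/k}\to\infty$ and $C:=\mathrm{mg}(M,N)<\infty$. Let $\varepsilon>0$ and let $g$ be holomorphic on $\Omega_\varepsilon$ and continuous on $\overline{\Omega_\varepsilon}$. Assume there are constants $L,a_1,a_2>0$ with $\sup_{\Omega_\varepsilon}|g|\le L$ and $\sup_{[-1,1]}|g|\le a_1h_m(a_2\varepsilon)$. Then with $a_3:=\max\{a_1,L\}$ and $a_4:=eCa_2$ we have $\sup_{\Omega_{\varepsilon/2}}|g|\le a_3h_n(a_4\varepsilon)$.
   Context: A weight sequence is a sequence $M=(M_k)_{k\ge0}$ of positive reals with $M_k=\mu_1\cdots\mu_k$, $M_0=1$, where $(\mu_k)$ is positive and increasing with $\mu_0=1$, and $M_k^{1/k}\to\infty$; $m_k:=M_k/k!$, $n_k:=N_k/k!$. $h_m(t):=\inf_{k\in\mathbb{N}}m_kt^k$ for $t>0$. $\mathrm{mg}(M,N):=\sup_{j,k\ge0,j+k\ge1}(M_{j+k}/(N_jN_k))^{1/(j+k)}$. For $\varepsilon>0$, $\Omega_\varepsilon\subseteq\mathbb{C}$ denotes the interior of the ellipse with vertices $\pm\cosh\varepsilon$ and co-vertices $\pm i\sinh\varepsilon$. *)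

theory Defs
  imports "HOL-Complex_Analysis.Complex_Analysis"
begin

definition weight_seq :: "(nat \<Rightarrow> real) \<Rightarrow> bool" where
  "weight_seq M \<longleftrightarrow>
     (\<exists>mu :: nat \<Rightarrow> real. mu 0 = 1 \<and> (\<forall>k. mu k > 0) \<and> mono mu \<and>
        (\<forall>k. M k = (\<Prod>i\<in>{1..k}. mu i))) \<and>
     filterlim (\<lambda>k. root k (M k)) at_top sequentially"

definition normw :: "(nat \<Rightarrow> real) \<Rightarrow> nat \<Rightarrow> real" where
  "normw M k = M k / fact k"

definition hfun :: "(nat \<Rightarrow> real) \<Rightarrow> real \<Rightarrow> real" where
  "hfun m t = (INF k. m k * t ^ k)"

definition mg :: "(nat \<Rightarrow> real) \<Rightarrow> (nat \<Rightarrow> real) \<Rightarrow> ereal" where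
  "mg M N = (SUP (j,k)\<in>{(j,k). j + k \<ge> 1}.
       ereal (root (j + k) (M (j + k) / (N j * N k))))"

definition ellipse :: "real \<Rightarrow> complex set" where
  "ellipse \<epsilon> = {z. (Re z / cosh \<epsilon>)\<^sup>2 + (Im z / sinh \<epsilon>)\<^sup>2 < 1}"

end

theory Submission
  imports Defs
begin





lemma Re_cos': "Re (cos z) = cos (Re z) * cosh (Im z)"
  by (simp add: Re_cos cosh_field_def)
lemma Im_cos': "Im (cos z) = - (sin (Re z) * sinh (Im z))"
  by (simp add: Im_cos sinh_field_def field_simps)

lemma cos_in_ellipse:
  assumes "0 \<le> Im s" "Im s < e"
  shows "cos s \<in> ellipse e"
proof -
  let ?x = "Re s" and ?y = "Im s"
  have e0: "e > 0" using assms by simp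
  have ch: "cosh ?y < cosh e" using assms by (subst cosh_real_nonneg_less_iff) auto
  have sh: "sinh ?y < sinh e" using assms sinh_real_strict_mono by (simp add: strict_mono_less)
  have shy: "0 \<le> sinh ?y" using assms by simp
  have she: "0 < sinh e" using e0 by simp
  have r1: "(cosh ?y / cosh e)^2 < 1" using ch by (simp add: power_less_one_iff abs_less_iff)
  have r1': "(cosh ?y / cosh e)^2 \<ge> 0" by simp
  have r2: "(sinh ?y / sinh e)^2 < 1" using sh shy she
    by (simp add: power_less_one_iff divide_less_eq)
  have r2': "(sinh ?y / sinh e)^2 \<ge> 0" by simp
  have eq: "(Re (cos s) / cosh e)\<^sup>2 + (Im (cos s) / sinh e)\<^sup>2
     = (cos ?x)^2 * (cosh ?y / cosh e)^2 + (sin ?x)^2 * (sinh ?y / sinh e)^2"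
    by (simp add: Re_cos' Im_cos' power_mult_distrib power_divide)
  have "(cos ?x)^2 * (cosh ?y / cosh e)^2 + (sin ?x)^2 * (sinh ?y / sinh e)^2 < 1"
  proof (cases "cos ?x = 0")
    case True
    then have "(sin ?x)^2 = 1" using sin_cos_squared_add[of ?x] by simp
    then show ?thesis using True r2 by simp
  next
    case False
    then have "(cos ?x)^2 > 0" by simp
    then have "(cos ?x)^2 * (cosh ?y / cosh e)^2 < (cos ?x)^2" using r1 by simp
    moreover have "(sin ?x)^2 * (sinh ?y / sinh e)^2 \<le> (sin ?x)^2"
      using r2 r2' by (simp add: mult_left_le)
    ultimately show ?thesis using sin_cos_squared_add[of ?x] by linarith
  qed
  then show ?thesis unfolding ellipse_def using eq by simp
qed

lemma cos_in_closure_ellipse: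
  assumes "0 \<le> Im s" "Im s \<le> e" "e > 0"
  shows "cos s \<in> closure (ellipse e)"
proof (cases "Im s < e")
  case True then show ?thesis using cos_in_ellipse assms closure_subset by blast
next
  case False
  then have ye: "Im s = e" using assms by simp
  show ?thesis unfolding closure_approachable
  proof (intro allI impI)
    fix d :: real assume d: "d > 0"
    have "(cos \<longlongrightarrow> cos s) (at s)" using continuous_at by (metis isCont_cos)
    then obtain r where r: "r > 0" "\<And>x. x \<noteq> s \<Longrightarrow> norm (x - s) < r \<Longrightarrow> norm (cos x - cos s) < d"
      using d unfolding LIM_eq by blast
    define t where "t = min (r/2) (e/2)"
    have t: "t > 0" "t < r" "t < e" using r assms unfolding t_def by auto
    have "cos (s - \<i> * of_real t) \<in> ellipse e"
      using t ye by (intro cos_in_ellipse) auto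
    moreover have "dist (cos (s - \<i> * of_real t)) (cos s) < d"
      using r(2)[of "s - \<i> * of_real t"] t by (simp add: dist_norm norm_mult)
    ultimately show "\<exists>y\<in>ellipse e. dist y (cos s) < d" by blast
  qed
qed



lemma three_lines:
  fixes K :: "complex \<Rightarrow> complex" and e a b B :: real
  assumes e: "e > 0" and a: "a > 0" and b: "b > 0"
    and hol: "K holomorphic_on {s. 0 < Im s \<and> Im s < e}"
    and cont: "continuous_on {s. 0 \<le> Im s \<and> Im s \<le> e} K"
    and bnd: "\<And>s. 0 \<le> Im s \<Longrightarrow> Im s \<le> e \<Longrightarrow> norm (K s) \<le> B"
    and bot: "\<And>s. Im s = 0 \<Longrightarrow> norm (K s) \<le> a"
    and top: "\<And>s. Im s = e \<Longrightarrow> norm (K s) \<le> b"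
    and s0: "0 \<le> Im s0" "Im s0 \<le> e"
  shows "norm (K s0) \<le> a * exp (Im s0 / e * (ln b - ln a))"
proof -
  define \<beta> where "\<beta> = (ln a - ln b) / e"
  have B0: "B \<ge> 0" using bnd[OF s0] norm_ge_zero order_trans by blast
  have eb: "exp (\<beta> * e) = a / b" using e a b by (simp add: \<beta>_def exp_diff)
  define c where "c = e^2 + (Re s0)^2"
  have key: "norm (K s0) \<le> a * exp (- \<beta> * Im s0) * exp (\<delta> * c)" if d: "\<delta> > 0" for \<delta>
  proof -
    define H where "H = (\<lambda>s. exp (- \<i> * of_real \<beta> * s - of_real \<delta> * s^2) * K s)"
    have normH: "norm (H s) = exp (\<beta> * Im s - \<delta> * ((Re s)^2 - (Im s)^2)) * norm (K s)" for s
      unfolding H_def by (simp add: norm_mult Re_power2)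
    define q where "q = \<bar>\<beta>\<bar> * e + ln (B + 1) + \<bar>ln a\<bar>"
    have q0: "q \<ge> 0" unfolding q_def using B0 e by (intro add_nonneg_nonneg mult_nonneg_nonneg ln_ge_zero) auto
    define X where "X = sqrt (q / \<delta>) + \<bar>Re s0\<bar> + 1"
    have X0: "X \<ge> sqrt (q / \<delta>)" "X > \<bar>Re s0\<bar>" unfolding X_def using q0 d by (auto intro: add_nonneg_pos)
    have "X^2 \<ge> (sqrt (q / \<delta>))^2" using X0 q0 d by (intro power_mono) auto
    then have "X^2 \<ge> q / \<delta>" using q0 d by simp
    then have dX: "\<delta> * X^2 \<ge> q" using d by (simp add: field_simps)
    define S where "S = cbox (Complex (-X) 0) (Complex X e)"
    have memS: "z \<in> S \<longleftrightarrow> -X \<le> Re z \<and> Re z \<le> X \<and> 0 \<le> Im z \<and> Im z \<le> e" for z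
      unfolding S_def by (simp add: in_cbox_complex_iff)
    have memB: "z \<in> box (Complex (-X) 0) (Complex X e) \<longleftrightarrow> -X < Re z \<and> Re z < X \<and> 0 < Im z \<and> Im z < e" for z
      by (simp add: in_box_complex_iff)
    have "H holomorphic_on (interior S)"
    proof -
      have "interior S = box (Complex (-X) 0) (Complex X e)" unfolding S_def by (rule interior_cbox)
      then have "interior S \<subseteq> {s. 0 < Im s \<and> Im s < e}" using memB by blast
      then have "K holomorphic_on interior S" using hol holomorphic_on_subset by blast
      then show ?thesis unfolding H_def by (intro holomorphic_intros)
    qed
    moreover have "continuous_on (closure S) H"
    proof -
      have "closure S = S" unfolding S_def by (rule closure_cbox)
      then have "closure S \<subseteq> {s. 0 \<le> Im s \<and> Im s \<le> e}" using memS by blast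
      then have "continuous_on (closure S) K" using cont continuous_on_subset by blast
      then show ?thesis unfolding H_def by (intro continuous_intros)
    qed
    moreover have "bounded S" unfolding S_def by simp
    moreover have "norm (H z) \<le> a * exp (\<delta> * e^2)" if z: "z \<in> frontier S" for z
    proof -
      have zS: "z \<in> S" and znb: "z \<notin> box (Complex (-X) 0) (Complex X e)"
      proof -
        have "frontier S = S - box (Complex (-X) 0) (Complex X e)" unfolding S_def by (rule frontier_cbox)
        then show "z \<in> S" "z \<notin> box (Complex (-X) 0) (Complex X e)" using z by blast+
      qed
      have zz: "-X \<le> Re z" "Re z \<le> X" "0 \<le> Im z" "Im z \<le> e" using zS memS by blast+
      have "\<not> (-X < Re z \<and> Re z < X \<and> 0 < Im z \<and> Im z < e)" using znb memB by blast
      then have cases: "Im z = 0 \<or> Im z = e \<or> \<bar>Re z\<bar> = X" using zz by linarith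
      have ea: "exp (\<delta> * e^2) \<ge> 1" using d by simp
      show ?thesis
      proof -
        { assume y: "Im z = 0"
          have "norm (H z) = exp (- \<delta> * (Re z)^2) * norm (K z)" using normH[of z] y by simp
          also have "\<dots> \<le> 1 * a" using d bot[OF y]
            by (intro mult_mono) auto
          also have "\<dots> \<le> a * exp (\<delta> * e^2)" using ea a by simp
          finally have ?thesis . }
        moreover
        { assume y: "Im z = e"
          have "norm (H z) = exp (\<beta> * e) * exp (\<delta> * (e^2 - (Re z)^2)) * norm (K z)"
            using normH[of z] y by (simp add: exp_add[symmetric] algebra_simps)
          also have "\<dots> \<le> exp (\<beta> * e) * exp (\<delta> * e^2) * b" using d top[OF y]
            by (intro mult_mono) auto
          also have "\<dots> = a * exp (\<delta> * e^2)" using eb b by simp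
          finally have ?thesis . }
        moreover
        { assume x: "\<bar>Re z\<bar> = X"
          have rx: "(Re z)^2 = X^2" using x by (metis power2_abs)
          have "norm (H z) \<le> exp (\<beta> * Im z - \<delta> * ((Re z)^2 - (Im z)^2)) * (B + 1)"
          proof -
            have "norm (K z) \<le> B + 1" using bnd[OF zz(3,4)] by simp
            then show ?thesis unfolding normH by (intro mult_left_mono) auto
          qed
          also have "\<dots> = exp (\<beta> * Im z - \<delta> * X^2 + \<delta> * (Im z)^2 + ln (B + 1))"
          proof -
            have "\<beta> * Im z - \<delta> * ((Re z)^2 - (Im z)^2) + ln (B+1) = \<beta> * Im z - \<delta> * X^2 + \<delta> * (Im z)^2 + ln (B + 1)"
              using rx by (simp add: algebra_simps)
            note eqA = this
            have e1: "exp (\<beta> * Im z - \<delta> * ((Re z)^2 - (Im z)^2) + ln (B+1)) = exp (\<beta> * Im z - \<delta> * ((Re z)^2 - (Im z)^2)) * exp (ln (B+1))"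
              by (rule exp_add)
            have e2: "exp (ln (B+1)) = B + 1" using B0 by simp
            show ?thesis unfolding eqA[symmetric] e1 e2 ..
          qed
          also have "\<dots> \<le> exp (ln a + \<delta> * e^2)"
          proof -
            have "\<beta> * Im z \<le> \<bar>\<beta>\<bar> * Im z" using zz by (intro mult_right_mono) auto
            also have "\<dots> \<le> \<bar>\<beta>\<bar> * e" using zz by (intro mult_left_mono) auto
            finally have i1: "\<beta> * Im z \<le> \<bar>\<beta>\<bar> * e" .
            have i2: "\<delta> * (Im z)^2 \<le> \<delta> * e^2" using zz d by (intro mult_left_mono power_mono) auto
            have i3: "- ln a \<le> \<bar>ln a\<bar>" by (rule abs_ge_minus_self)
            have "\<beta> * Im z - \<delta> * X^2 + \<delta> * (Im z)^2 + ln (B + 1) \<le> ln a + \<delta> * e^2"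
              using i1 i2 i3 dX unfolding q_def by linarith
            then show ?thesis by (subst exp_le_cancel_iff)
          qed
          also have "\<dots> = a * exp (\<delta> * e^2)" using a by (simp add: exp_add)
          finally have ?thesis . }
        ultimately show ?thesis using cases by blast
      qed
    qed
    moreover have "s0 \<in> S"
    proof -
      have "-X \<le> Re s0 \<and> Re s0 \<le> X" using X0(2) by linarith
      then show ?thesis unfolding memS using s0 by blast
    qed
    ultimately have "norm (H s0) \<le> a * exp (\<delta> * e^2)"
      by (rule maximum_modulus_frontier)
    then have "exp (\<beta> * Im s0 - \<delta> * ((Re s0)^2 - (Im s0)^2)) * norm (K s0) \<le> a * exp (\<delta> * e^2)"
      using normH by simp
    then have "norm (K s0) \<le> a * exp (\<delta> * e^2) / exp (\<beta> * Im s0 - \<delta> * ((Re s0)^2 - (Im s0)^2))"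
      by (subst pos_le_divide_eq) (auto simp: mult.commute)
    also have "\<dots> = a * exp (- \<beta> * Im s0) * exp (\<delta> * (e^2 + (Re s0)^2 - (Im s0)^2))"
    proof -
      have "\<delta> * e^2 - (\<beta> * Im s0 - \<delta> * ((Re s0)^2 - (Im s0)^2)) = - \<beta> * Im s0 + \<delta> * (e^2 + (Re s0)^2 - (Im s0)^2)"
        by (simp add: algebra_simps)
      note eq = this
      have "exp (\<delta> * e^2) / exp (\<beta> * Im s0 - \<delta> * ((Re s0)^2 - (Im s0)^2))
          = exp (\<delta> * e^2 - (\<beta> * Im s0 - \<delta> * ((Re s0)^2 - (Im s0)^2)))"
        by (rule exp_diff[symmetric])
      also have "\<dots> = exp (- \<beta> * Im s0) * exp (\<delta> * (e^2 + (Re s0)^2 - (Im s0)^2))"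
        unfolding eq by (rule exp_add)
      finally show ?thesis by (simp only: times_divide_eq_right[symmetric] mult.assoc)
    qed
    also have "\<dots> \<le> a * exp (- \<beta> * Im s0) * exp (\<delta> * c)"
      unfolding c_def using a d by (intro mult_left_mono) auto
    finally show ?thesis .
  qed
  have lim: "((\<lambda>\<delta>. a * exp (- \<beta> * Im s0) * exp (\<delta> * c)) \<longlongrightarrow> a * exp (- \<beta> * Im s0) * exp (0 * c)) (at_right 0)"
    by (intro tendsto_intros)
  have "norm (K s0) \<le> a * exp (- \<beta> * Im s0) * exp (0 * c)"
  proof (rule tendsto_le[OF _ lim tendsto_const])
    have "eventually (\<lambda>\<delta>::real. \<delta> > 0) (at_right 0)" by (simp add: eventually_at_right_less)
    then show "eventually (\<lambda>\<delta>. norm (K s0) \<le> a * exp (- \<beta> * Im s0) * exp (\<delta> * c)) (at_right 0)"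
      by (rule eventually_mono) (rule key)
  qed simp
  also have "\<dots> = a * exp (Im s0 / e * (ln b - ln a))"
  proof -
    have "- \<beta> * Im s0 = Im s0 / e * (ln b - ln a)" unfolding \<beta>_def using e by (simp add: field_simps)
    then show ?thesis by simp
  qed
  finally show ?thesis .
qed




lemma ws_pos: assumes "weight_seq M" shows "M k > 0"
proof -
  obtain mu where "\<forall>k. mu k > 0" "\<forall>k. M k = (\<Prod>i\<in>{1..k}. mu i)"
    using assms unfolding weight_seq_def by blast
  then show ?thesis by (simp add: prod_pos)
qed

lemma ws_0: assumes "weight_seq M" shows "M 0 = 1"
proof -
  obtain mu where "\<forall>k. M k = (\<Prod>i\<in>{1..k}. mu i)"
    using assms unfolding weight_seq_def by blast
  then show ?thesis by simp
qed

lemma normw_pos: "weight_seq M \<Longrightarrow> normw M k > 0"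
  unfolding normw_def using ws_pos by simp

lemma hfun_bdd: fixes m :: "nat \<Rightarrow> real" assumes "\<And>k. m k > 0" "t \<ge> 0" shows "bdd_below (range (\<lambda>k. m k * t ^ k))"
proof -
  have "\<And>k. m k * t ^ k \<ge> 0" using assms by (metis less_imp_le mult_nonneg_nonneg zero_le_power)
  then show ?thesis using assms(2) by (intro bdd_belowI[of _ 0]) auto
qed

lemma hfun_nonneg: assumes "\<And>k. m k > 0" "t \<ge> 0" shows "hfun m t \<ge> 0"
proof -
  have "\<And>k. m k * t ^ k \<ge> 0" using assms by (metis less_imp_le mult_nonneg_nonneg zero_le_power)
  then show ?thesis unfolding hfun_def using assms(2) by (intro cINF_greatest) auto
qed

lemma hfun_le: assumes "\<And>k. m k > 0" "t \<ge> 0" shows "hfun m t \<le> m k * t ^ k"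
  unfolding hfun_def using hfun_bdd[OF assms] by (rule cINF_lower) simp

lemma hfun_mono: assumes "\<And>k. m k > 0" "0 \<le> t" "t \<le> t'" shows "hfun m t \<le> hfun m t'"
  unfolding hfun_def
proof (rule cINF_mono)
  show "bdd_below (range (\<lambda>k. m k * t ^ k))" by (rule hfun_bdd) (use assms in auto)
  show "\<exists>n\<in>UNIV. m n * t ^ n \<le> m k * t' ^ k" for k
    using assms by (intro bexI[of _ k] mult_left_mono power_mono) (auto intro: less_imp_le)
qed simp

lemma mg_bound:
  assumes "weight_seq M" "weight_seq N" "mg M N < \<infinity>"
  shows "real_of_ereal (mg M N) > 0"
    and "j + k \<ge> 1 \<Longrightarrow> root (j + k) (M (j + k) / (N j * N k)) \<le> real_of_ereal (mg M N)"
proof -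
  have up: "ereal (root (j + k) (M (j + k) / (N j * N k))) \<le> mg M N" if "j + k \<ge> 1" for j k
    unfolding mg_def using that by (intro SUP_upper2[where i="(j,k)"]) auto
  have p: "root 1 (M 1 / (N 1 * N 0)) > 0" using ws_pos[OF assms(1)] ws_pos[OF assms(2)] by simp
  have "ereal (root 1 (M 1 / (N 1 * N 0))) \<le> mg M N" using up[of 1 0] by simp
  then have fin: "mg M N = ereal (real_of_ereal (mg M N))" and pos: "root 1 (M 1 / (N 1 * N 0)) \<le> real_of_ereal (mg M N)"
    using assms(3) p by (cases "mg M N"; auto)+
  show "real_of_ereal (mg M N) > 0" using p pos by linarith
  show "j + k \<ge> 1 \<Longrightarrow> root (j + k) (M (j + k) / (N j * N k)) \<le> real_of_ereal (mg M N)"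
    using up[of j k] fin by (metis ereal_less_eq(3))
qed

lemma sqrt_hfun:
  assumes "weight_seq M" "weight_seq N" "mg M N < \<infinity>" "t \<ge> 0"
  shows "sqrt (hfun (normw M) t) \<le> hfun (normw N) (real_of_ereal (mg M N) * t)"
proof -
  define C where "C = real_of_ereal (mg M N)"
  have C0: "C > 0" unfolding C_def using mg_bound(1)[OF assms(1-3)] .
  have key: "normw M (2*k) \<le> (normw N k * C ^ k)^2" for k
  proof (cases "k = 0")
    case True then show ?thesis using ws_0[OF assms(1)] ws_0[OF assms(2)] by (simp add: normw_def)
  next
    case False
    define r where "r = M (2*k) / (N k * N k)"
    have r0: "r > 0" unfolding r_def using ws_pos[OF assms(1)] ws_pos[OF assms(2)] by simp
    have "root (2*k) r \<le> C" unfolding r_def C_def using mg_bound(2)[OF assms(1-3), of k k] False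
      by (simp add: mult_2)
    then have "root (2*k) r ^ (2*k) \<le> C ^ (2*k)" using r0 real_root_ge_zero[of r "2*k"] by (intro power_mono) auto
    then have "r \<le> C ^ (2*k)" using r0 False by simp
    then have MM: "M (2*k) \<le> C ^ (2*k) * (N k * N k)" unfolding r_def
      using ws_pos[OF assms(2)] by (simp add: divide_le_eq)
    have ff: "fact k * fact k \<le> (fact (2*k) :: real)"
    proof -
      have e: "fact (2*k) = fact k * fact k * real (2*k choose k)"
      proof -
        have e0: "fact k * fact k * (2*k choose k) = (fact (2*k) :: nat)"
          using binomial_fact_lemma[of k "2*k"] by (simp add: mult_2)
        then show ?thesis by (metis of_nat_fact of_nat_mult)
      qed
      have "real (2*k choose k) \<ge> 1" by (simp add: Suc_leI)
      then have "fact k * fact k * 1 \<le> fact k * fact k * real (2*k choose k)"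
        by (intro mult_left_mono) auto
      then show ?thesis using e by simp
    qed
    have "normw M (2*k) = M (2*k) / fact (2*k)" by (simp add: normw_def)
    also have "\<dots> \<le> C ^ (2*k) * (N k * N k) / (fact k * fact k)"
      using MM ff ws_pos[OF assms(1)] by (intro frac_le) auto
    also have "\<dots> = (normw N k * C ^ k)^2"
    proof -
      have c2: "C^(2*k) = (C^k)^2" by (simp add: power_mult[symmetric] mult.commute)
      show ?thesis unfolding c2 normw_def power_mult_distrib power_divide power2_eq_square by simp
    qed
    finally show ?thesis .
  qed
  have "sqrt (hfun (normw M) t) \<le> normw N k * (C * t) ^ k" for k
  proof -
    have "hfun (normw M) t \<le> normw M (2*k) * t ^ (2*k)"
      using hfun_le normw_pos[OF assms(1)] assms(4) by blast
    also have "\<dots> \<le> (normw N k * C ^ k)^2 * t ^ (2*k)"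
      using key assms(4) by (intro mult_right_mono) auto
    also have "\<dots> = (normw N k * (C * t) ^ k)^2"
    proof -
      have t2: "t^(2*k) = (t^k)^2" by (simp add: power_mult[symmetric] mult.commute)
      show ?thesis unfolding t2 power_mult_distrib by (simp add: mult_ac)
    qed
    finally have "sqrt (hfun (normw M) t) \<le> sqrt ((normw N k * (C * t) ^ k)^2)"
      by (rule real_sqrt_le_mono)
    also have "\<dots> = normw N k * (C * t) ^ k"
    proof -
      have "0 \<le> normw N k * (C*t)^k" using normw_pos[OF assms(2), of k] C0 assms(4) by simp
      then show ?thesis by simp
    qed
    finally show ?thesis .
  qed
  then show ?thesis unfolding hfun_def C_def by (intro cINF_greatest) auto
qed
lemma cos_not_in_ellipse:
  assumes "e > 0" "Im s \<ge> e"
  shows "cos s \<notin> ellipse e"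
proof -
  let ?x = "Re s" and ?y = "Im s"
  have ch: "cosh e \<le> cosh ?y" using assms by (subst cosh_real_nonneg_le_iff) auto
  have sh: "sinh e \<le> sinh ?y" using assms sinh_real_strict_mono by (simp add: strict_mono_less_eq)
  have she: "0 < sinh e" using assms by simp
  have r1: "(cosh ?y / cosh e)^2 \<ge> 1" using ch by (simp add: one_le_power)
  have r2: "(sinh ?y / sinh e)^2 \<ge> 1" using sh she by (simp add: one_le_power)
  have eq: "(Re (cos s) / cosh e)\<^sup>2 + (Im (cos s) / sinh e)\<^sup>2
     = (cos ?x)^2 * (cosh ?y / cosh e)^2 + (sin ?x)^2 * (sinh ?y / sinh e)^2"
    by (simp add: Re_cos' Im_cos' power_mult_distrib power_divide)
  have "(cos ?x)^2 * (cosh ?y / cosh e)^2 \<ge> (cos ?x)^2" using r1 by (simp add: mult_le_cancel_left1)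
  moreover have "(sin ?x)^2 * (sinh ?y / sinh e)^2 \<ge> (sin ?x)^2" using r2 by (simp add: mult_le_cancel_left1)
  ultimately have "(cos ?x)^2 * (cosh ?y / cosh e)^2 + (sin ?x)^2 * (sinh ?y / sinh e)^2 \<ge> 1"
    using sin_cos_squared_add[of ?x] by linarith
  then show ?thesis unfolding ellipse_def using eq by simp
qed

lemma interp:
  fixes a1 L u t :: real
  assumes "a1 > 0" "L > 0" "u > 0" "u \<le> 1" "0 \<le> t" "t \<le> 1/2"
  shows "a1 * u * exp (t * (ln L - ln (a1 * u))) \<le> max a1 L * sqrt u"
proof -
  define m where "m = max a1 L"
  have m0: "m > 0" unfolding m_def using assms by simp
  have la: "ln a1 \<le> ln m" and lL: "ln L \<le> ln m" unfolding m_def using assms by auto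
  have lu: "ln u \<le> 0" using assms by simp
  have "a1 * u * exp (t * (ln L - ln (a1 * u))) = exp ((1 - t) * ln a1 + t * ln L + (1 - t) * ln u)"
  proof -
    have "a1 * u = exp (ln a1 + ln u)" using assms by (simp add: exp_add)
    moreover have "ln (a1 * u) = ln a1 + ln u" using assms by (simp add: ln_mult)
    ultimately show ?thesis by (simp add: exp_add[symmetric] algebra_simps)
  qed
  also have "\<dots> \<le> exp ((1 - t) * ln m + t * ln m + (1/2) * ln u)"
  proof -
    have "(1 - t) * ln a1 \<le> (1 - t) * ln m" using la assms by (intro mult_left_mono) auto
    moreover have "t * ln L \<le> t * ln m" using lL assms by (intro mult_left_mono) auto
    moreover have "(1 - t) * ln u \<le> (1/2) * ln u" using lu assms by (intro mult_right_mono_neg) auto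
    ultimately show ?thesis by simp
  qed
  also have "\<dots> = m * exp (ln u / 2)" using m0 by (simp add: exp_add algebra_simps)
  also have "exp (ln u / 2) = sqrt u"
    using assms powr_half_sqrt[of u] by (simp add: powr_def)
  finally show ?thesis unfolding m_def .
qed

theorem lemma5p2:
  fixes M N :: "nat \<Rightarrow> real" and g :: "complex \<Rightarrow> complex"
    and \<epsilon> L a1 a2 :: real
  assumes "weight_seq M" and "weight_seq N"
    and "filterlim (\<lambda>k. root k (normw M k)) at_top sequentially"
    and "filterlim (\<lambda>k. root k (normw N k)) at_top sequentially"
    and "mg M N < \<infinity>"
    and "\<epsilon> > 0"
    and "g holomorphic_on ellipse \<epsilon>"
    and "continuous_on (closure (ellipse \<epsilon>)) g"
    and "L > 0" and "a1 > 0" and "a2 > 0"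
    and "\<forall>z\<in>ellipse \<epsilon>. norm (g z) \<le> L"
    and "\<forall>x\<in>{-1..1}. norm (g (complex_of_real x)) \<le> a1 * hfun (normw M) (a2 * \<epsilon>)"
  shows "\<forall>z\<in>ellipse (\<epsilon> / 2).
           norm (g z) \<le> max a1 L * hfun (normw N) (exp 1 * real_of_ereal (mg M N) * a2 * \<epsilon>)"
proof (intro ballI)
  fix z assume z: "z \<in> ellipse (\<epsilon> / 2)"
  define h where "h = hfun (normw M) (a2 * \<epsilon>)"
  define m where "m = max a1 L"
  define C where "C = real_of_ereal (mg M N)"
  have e0: "\<epsilon> > 0" using assms by simp
  have t0: "a2 * \<epsilon> \<ge> 0" using assms by simp
  have mpos: "\<And>k. normw M k > 0" using normw_pos[OF assms(1)] .
  have npos: "\<And>k. normw N k > 0" using normw_pos[OF assms(2)] .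
  have h0: "h \<ge> 0" unfolding h_def by (rule hfun_nonneg[of "normw M" "a2 * \<epsilon>"]) (use mpos t0 in auto)
  have h1: "h \<le> 1" unfolding h_def using hfun_le[of "normw M" "a2 * \<epsilon>" 0] mpos t0
    by (simp add: normw_def ws_0[OF assms(1)])
  have C0: "C > 0" unfolding C_def using mg_bound(1)[OF assms(1,2,5)] .
  obtain s0 where cz: "cos s0 = z" and y0: "0 \<le> Im s0" "Im s0 < \<epsilon> / 2"
  proof -
    define w where "w = Arccos z"
    define s where "s = (if 0 \<le> Im w then w else - w)"
    have "cos s = z" unfolding s_def w_def by simp
    moreover have "0 \<le> Im s" unfolding s_def by auto
    moreover have "Im s < \<epsilon> / 2"
    proof (rule ccontr)
      assume "\<not> Im s < \<epsilon> / 2"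
      then have "cos s \<notin> ellipse (\<epsilon> / 2)" using e0 by (intro cos_not_in_ellipse) auto
      then show False using z \<open>cos s = z\<close> by simp
    qed
    ultimately show ?thesis using that by blast
  qed
  define K where "K = (\<lambda>s. g (cos s))"
  have hol: "K holomorphic_on {s. 0 < Im s \<and> Im s < \<epsilon>}"
  proof -
    have "cos ` {s. 0 < Im s \<and> Im s < \<epsilon>} \<subseteq> ellipse \<epsilon>" using cos_in_ellipse by auto
    then have "(g \<circ> cos) holomorphic_on {s. 0 < Im s \<and> Im s < \<epsilon>}"
      by (intro holomorphic_on_compose_gen[OF _ assms(7)]) (auto intro: holomorphic_intros)
    then show ?thesis unfolding K_def o_def .
  qed
  have cimg: "cos ` {s. 0 \<le> Im s \<and> Im s \<le> \<epsilon>} \<subseteq> closure (ellipse \<epsilon>)"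
    using cos_in_closure_ellipse e0 by auto
  have cont: "continuous_on {s. 0 \<le> Im s \<and> Im s \<le> \<epsilon>} K"
    unfolding K_def by (rule continuous_on_compose2[OF assms(8) _ cimg]) (intro continuous_intros)
  have bnd: "norm (K s) \<le> L" if "0 \<le> Im s" "Im s \<le> \<epsilon>" for s
    unfolding K_def using continuous_on_closure_norm_le[OF assms(8) assms(12)] cimg that by blast
  have bot: "norm (K s) \<le> a1 * h" if "Im s = 0" for s
  proof -
    have "s = complex_of_real (Re s)" using that by (simp add: complex_eq_iff)
    then have "cos s = complex_of_real (cos (Re s))" by (metis cos_of_real)
    moreover have "cos (Re s) \<in> {-1..1}" by simp
    ultimately show ?thesis unfolding K_def h_def using assms(13) by metis
  qed
  have gz: "norm (g z) \<le> L" using bnd[of s0] y0 cz unfolding K_def by simp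
  have main: "norm (g z) \<le> m * sqrt h"
  proof (cases "h < 1")
    case False
    then have "h = 1" using h1 by simp
    then show ?thesis using gz unfolding m_def by simp
  next
    case True
    have step: "norm (g z) \<le> m * sqrt (h + \<delta>)" if d: "0 < \<delta>" "\<delta> < 1 - h" for \<delta>
    proof -
      define a where "a = a1 * (h + \<delta>)"
      have a0: "a > 0" unfolding a_def using assms(10) h0 d by simp
      have "norm (K s0) \<le> a * exp (Im s0 / \<epsilon> * (ln L - ln a))"
      proof (rule three_lines[OF e0 a0 assms(9) hol cont])
        show "norm (K s) \<le> L" if "0 \<le> Im s" "Im s \<le> \<epsilon>" for s using bnd that by blast
        show "norm (K s) \<le> a" if "Im s = 0" for s
        proof -
          have "a1 * h \<le> a" unfolding a_def using assms(10) d by simp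
          then show ?thesis using bot[OF that] by linarith
        qed
        show "norm (K s) \<le> L" if "Im s = \<epsilon>" for s using bnd that e0 by simp
        show "0 \<le> Im s0" "Im s0 \<le> \<epsilon>" using y0 by auto
      qed
      also have "\<dots> = a1 * (h + \<delta>) * exp (Im s0 / \<epsilon> * (ln L - ln (a1 * (h + \<delta>))))"
        unfolding a_def by simp
      also have "\<dots> \<le> m * sqrt (h + \<delta>)"
        unfolding m_def using assms(9,10) h0 d y0 e0
        by (intro interp) (auto simp: divide_simps)
      finally show ?thesis using cz unfolding K_def by simp
    qed
    have lim: "((\<lambda>\<delta>. m * sqrt (h + \<delta>)) \<longlongrightarrow> m * sqrt (h + 0)) (at_right 0)"
      by (intro tendsto_intros)
    have ev: "eventually (\<lambda>\<delta>. norm (g z) \<le> m * sqrt (h + \<delta>)) (at_right 0)"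
      unfolding eventually_at_right_field using True step by (intro exI[of _ "1 - h"]) auto
    have "norm (g z) \<le> m * sqrt (h + 0)"
      by (rule tendsto_le[OF _ lim tendsto_const ev]) simp
    then show ?thesis by simp
  qed
  also have "m * sqrt h \<le> m * hfun (normw N) (C * (a2 * \<epsilon>))"
    unfolding h_def C_def m_def using sqrt_hfun[OF assms(1,2,5) t0] assms(9)
    by (intro mult_left_mono) auto
  also have "\<dots> \<le> m * hfun (normw N) (exp 1 * C * a2 * \<epsilon>)"
  proof -
    have "C * (a2 * \<epsilon>) \<le> exp 1 * C * a2 * \<epsilon>"
    proof -
      have "1 * (C * (a2 * \<epsilon>)) \<le> exp 1 * (C * (a2 * \<epsilon>))"
        using C0 t0 by (intro mult_right_mono) auto
      then show ?thesis by (simp add: mult.assoc)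
    qed
    then show ?thesis unfolding m_def using C0 t0 assms(9)
      by (intro mult_left_mono hfun_mono[of "normw N"]) (auto simp: npos)
  qed
  finally show "norm (g z) \<le> max a1 L * hfun (normw N) (exp 1 * real_of_ereal (mg M N) * a2 * \<epsilon>)"
    unfolding m_def C_def .
qed


end
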